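(* Let $\tilde T_1,\tilde T_2,\dots$ be i.i.d. positive random variables distributed as $\tilde T$, let $\nu$ be independent of them with $\mathbb{P}(\nu=k)=2^{-k}$, $k\ge1$, and let $T=\sum_{i=1}^\nu\tilde T_i$. Let $b>0$. If $\mathbb{P}(\tilde T>\tau)\le e^{-b\tau}$ for all $\tau\ge0$, then $\mathbb{P}(T>\tau)\le e^{-b\tau/2}$ for all $\tau\ge0$. Likewise, if $\mathbb{P}(\tilde T>\tau)\ge e^{-b\tau}$ for all $\tau\ge0$, then $\mathbb{P}(T>\tau)\ge e^{-b\tau/2}$ for all $\tau\ge0$. *)

theory Defs
  imports "HOL-Probability.Probability"
begin

end

theory Submission
  imports Defs
begin

lemma conv_tail:
  fixes M N :: "real measure"
  assumes "finite_measure M" "finite_measure N" "sets M = sets borel" "sets N = sets borel"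
  shows "emeasure (M \<star> N) {t<..} = (\<integral>\<^sup>+x. emeasure N {t-x<..} \<partial>M)"
proof -
  have "emeasure (M \<star> N) {t<..} = (\<integral>\<^sup>+x. \<integral>\<^sup>+y. indicator {t<..} (x + y) \<partial>N \<partial>M)"
    using assms by (intro convolution_emeasure') auto
  also have "\<dots> = (\<integral>\<^sup>+x. \<integral>\<^sup>+y. indicator {t-x<..} y \<partial>N \<partial>M)"
    by (intro nn_integral_cong) (auto split: split_indicator)
  also have "\<dots> = (\<integral>\<^sup>+x. emeasure N {t-x<..} \<partial>M)"
    using assms by (intro nn_integral_cong) (simp add: sets_eq_imp_space_eq)
  finally show ?thesis .
qed

lemma dom_conv:
  fixes M1 M2 N1 N2 :: "real measure"
  assumes f: "finite_measure M1" "finite_measure M2" "finite_measure N1" "finite_measure N2"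
    and s: "sets M1 = sets borel" "sets M2 = sets borel" "sets N1 = sets borel" "sets N2 = sets borel"
    and d1: "\<And>t. emeasure M1 {t<..} \<le> emeasure N1 {t<..}"
    and d2: "\<And>t. emeasure M2 {t<..} \<le> emeasure N2 {t<..}"
  shows "emeasure (M1 \<star> M2) {t<..} \<le> emeasure (N1 \<star> N2) {t<..}"
proof -
  have "emeasure (M1 \<star> M2) {t<..} = (\<integral>\<^sup>+x. emeasure M2 {t-x<..} \<partial>M1)"
    using f s by (intro conv_tail) auto
  also have "\<dots> \<le> (\<integral>\<^sup>+x. emeasure N2 {t-x<..} \<partial>M1)"
    by (intro nn_integral_mono d2)
  also have "\<dots> = emeasure (M1 \<star> N2) {t<..}"
    using f s by (intro conv_tail[symmetric]) auto
  also have "\<dots> = emeasure (N2 \<star> M1) {t<..}"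
    using f s by (subst convolution_commutative) auto
  also have "\<dots> = (\<integral>\<^sup>+x. emeasure M1 {t-x<..} \<partial>N2)"
    using f s by (intro conv_tail) auto
  also have "\<dots> \<le> (\<integral>\<^sup>+x. emeasure N1 {t-x<..} \<partial>N2)"
    by (intro nn_integral_mono d1)
  also have "\<dots> = emeasure (N2 \<star> N1) {t<..}"
    using f s by (intro conv_tail[symmetric]) auto
  also have "\<dots> = emeasure (N1 \<star> N2) {t<..}"
    using f s by (subst convolution_commutative) auto
  finally show ?thesis .
qed

definition Erl :: "nat \<Rightarrow> real \<Rightarrow> real measure" where
  "Erl k b = density lborel (erlang_density k b)"

lemma Erl_prob: "b > 0 \<Longrightarrow> prob_space (Erl k b)"
  unfolding Erl_def by (rule prob_space_erlang_density)

lemma Erl_sets: "sets (Erl k b) = sets borel"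
  unfolding Erl_def by simp

lemma Erl_conv: assumes "b > 0" shows "Erl k b \<star> Erl 0 b = Erl (Suc k) b"
proof -
  have "Erl k b \<star> Erl 0 b = density lborel (\<lambda>x. \<integral>\<^sup>+y. ennreal (erlang_density k b (x - y)) * ennreal (erlang_density 0 b y) \<partial>lborel)"
    unfolding Erl_def
    using Erl_prob[OF assms, of k] Erl_prob[OF assms, of 0] unfolding Erl_def
    by (intro convolution_density) (auto intro: prob_space.finite_measure)
  also have "\<dots> = Erl (Suc k) b"
    unfolding convolution_erlang_density[OF assms] Erl_def by simp
  finally show ?thesis .
qed

lemma Erl_tail: assumes "b > 0"
  shows "emeasure (Erl k b) {t<..} = ennreal (1 - erlang_CDF k b t)"
proof -
  interpret prob_space "Erl k b" by (rule Erl_prob[OF assms])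
  have sp: "space (Erl k b) = UNIV" unfolding Erl_def by simp
  have "emeasure (Erl k b) {t<..} = emeasure (Erl k b) (space (Erl k b) - {..t})"
    by (simp add: sp) (metis Compl_atMost Compl_eq_Diff_UNIV)
  also have "\<dots> = 1 - emeasure (Erl k b) {..t}"
    by (subst emeasure_compl) (auto simp: Erl_sets emeasure_space_1)
  also have "\<dots> = 1 - ennreal (erlang_CDF k b t)"
    unfolding Erl_def using assms by (simp add: emeasure_erlang_density)
  also have "\<dots> = ennreal (1 - erlang_CDF k b t)"
    using ennreal_minus[of "erlang_CDF k b t" 1] assms by simp
  finally show ?thesis .
qed

lemma dom_iter:
  fixes F G :: "nat \<Rightarrow> real measure" and A B :: "real measure"
  assumes fA: "finite_measure A" "finite_measure B" "sets A = sets borel" "sets B = sets borel"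
    and fF: "\<And>k. finite_measure (F k)" "\<And>k. finite_measure (G k)"
    and sF: "\<And>k. sets (F k) = sets borel" "\<And>k. sets (G k) = sets borel"
    and F0: "F 0 = A" "G 0 = B"
    and FS: "\<And>k. F (Suc k) = (A \<star> F k)" "\<And>k. G (Suc k) = (B \<star> G k)"
    and d: "\<And>t. emeasure A {t<..} \<le> emeasure B {t<..}"
  shows "emeasure (F k) {t<..} \<le> emeasure (G k) {t<..}"
proof (induction k arbitrary: t)
  case 0 then show ?case using d F0 by simp
next
  case (Suc k)
  then show ?case unfolding FS
    by (intro dom_conv fA fF sF d Suc)
qed

lemma half_partial:
  fixes c :: "nat \<Rightarrow> real"
  shows "(\<Sum>m<N. (1/2)^(Suc m) * (\<Sum>n\<le>m. c n)) = (\<Sum>n<N. c n * (1/2)^n) - (1/2)^N * (\<Sum>n<N. c n)"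
proof (induction N)
  case 0 then show ?case by simp
next
  case (Suc N)
  have "(\<Sum>m<Suc N. (1/2)^(Suc m) * (\<Sum>n\<le>m. c n)) = (\<Sum>m<N. (1/2)^(Suc m) * (\<Sum>n\<le>m. c n)) + (1/2)^(Suc N) * ((\<Sum>n<N. c n) + c N)"
    by (simp only: sum.lessThan_Suc lessThan_Suc_atMost[symmetric])
  also have "\<dots> = (\<Sum>n<N. c n * (1/2)^n) - (1/2)^N * (\<Sum>n<N. c n) + (1/2)^(Suc N) * ((\<Sum>n<N. c n) + c N)"
    by (simp only: Suc.IH)
  also have "\<dots> = ((\<Sum>n<N. c n * (1/2)^n) + c N * (1/2)^N) - (1/2)^(Suc N) * ((\<Sum>n<N. c n) + c N)"
    by (simp only: power_Suc) (simp add: algebra_simps)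
  also have "\<dots> = (\<Sum>n<Suc N. c n * (1/2)^n) - (1/2)^(Suc N) * (\<Sum>n<Suc N. c n)"
    by (simp only: sum.lessThan_Suc)
  finally show ?case .
qed

lemma scaleR_fact_eq: "(x::real) /\<^sub>R fact n = x / fact n"
  by (simp add: divide_inverse_commute)

lemma half_series:
  fixes a :: real
  shows "(\<lambda>m. (1/2)^(Suc m) * (\<Sum>n\<le>m. a^n / fact n)) sums exp (a/2)"
proof -
  have e1: "(\<lambda>N. \<Sum>n<N. a^n / fact n) \<longlonglongrightarrow> exp a"
    using exp_converges[of a] unfolding sums_def scaleR_fact_eq .
  have e2: "(\<lambda>N. \<Sum>n<N. a^n / fact n * (1/2)^n) \<longlonglongrightarrow> exp (a/2)"
  proof -
    have "(\<lambda>N. \<Sum>n<N. (a/2)^n / fact n) \<longlonglongrightarrow> exp (a/2)"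
      using exp_converges[of "a/2"] unfolding sums_def scaleR_fact_eq .
    moreover have "\<And>n. (a/2)^n / fact n = a^n / fact n * (1/2)^n"
      by (simp add: power_divide)
    ultimately show ?thesis by simp
  qed
  have z: "(\<lambda>N. (1/2::real)^N * (\<Sum>n<N. a^n / fact n)) \<longlonglongrightarrow> 0 * exp a"
    by (intro tendsto_mult e1 LIMSEQ_power_zero) simp
  have "(\<lambda>N. (\<Sum>n<N. a^n / fact n * (1/2)^n) - (1/2::real)^N * (\<Sum>n<N. a^n / fact n)) \<longlonglongrightarrow> exp (a/2) - 0 * exp a"
    by (intro tendsto_diff e2 z)
  then show ?thesis unfolding sums_def half_partial by simp
qed


theorem proposition6:
  fixes M :: "'a measure" and Tt :: "nat \<Rightarrow> 'a \<Rightarrow> real" and nu :: "'a \<Rightarrow> nat" and b :: real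
  assumes "prob_space M"
    and rv: "\<And>i. Tt i \<in> borel_measurable M"
    and nu_meas: "nu \<in> measurable M (count_space UNIV)"
    and indep: "prob_space.indep_vars M (\<lambda>_. borel)
                  (\<lambda>j. case j of None \<Rightarrow> (\<lambda>\<omega>. real (nu \<omega>)) | Some i \<Rightarrow> Tt i) UNIV"
    and iid_distr: "\<And>i. distr M borel (Tt i) = distr M borel (Tt 0)"
    and pos: "\<And>i. AE \<omega> in M. Tt i \<omega> > 0"
    and nu_distr: "\<And>k::nat. k \<ge> 1 \<Longrightarrow> measure M {\<omega> \<in> space M. nu \<omega> = k} = 1 / 2 ^ k"
    and b: "b > 0"
  defines "T \<equiv> (\<lambda>\<omega>. \<Sum>i<nu \<omega>. Tt i \<omega>)"
  shows "((\<forall>\<tau>\<ge>0. measure M {\<omega> \<in> space M. Tt 0 \<omega> > \<tau>} \<le> exp (- b * \<tau>))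
            \<longrightarrow> (\<forall>\<tau>\<ge>0. measure M {\<omega> \<in> space M. T \<omega> > \<tau>} \<le> exp (- b * \<tau> / 2)))
       \<and> ((\<forall>\<tau>\<ge>0. measure M {\<omega> \<in> space M. Tt 0 \<omega> > \<tau>} \<ge> exp (- b * \<tau>))
            \<longrightarrow> (\<forall>\<tau>\<ge>0. measure M {\<omega> \<in> space M. T \<omega> > \<tau>} \<ge> exp (- b * \<tau> / 2)))"
proof -
  interpret P: prob_space M by fact
  note rv[measurable] nu_meas[measurable]
  define S where "S k \<omega> = (\<Sum>i<k. Tt i \<omega>)" for k \<omega>
  have S_meas[measurable]: "S k \<in> borel_measurable M" for k unfolding S_def by measurable
  have T_eq: "T \<omega> = S (nu \<omega>) \<omega>" for \<omega> unfolding T_def S_def by simp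
  let ?X = "\<lambda>j. case j of None \<Rightarrow> (\<lambda>\<omega>. real (nu \<omega>)) | Some i \<Rightarrow> Tt i"
  have sumX: "(\<lambda>\<omega>. \<Sum>j\<in>Some ` {..<k}. ?X j \<omega>) = S k" for k
    by (simp add: S_def sum.reindex fun_eq_iff)
  have indT: "P.indep_var borel (Tt k) borel (S k)" for k
  proof -
    have "P.indep_var borel (?X (Some k)) borel (\<lambda>\<omega>. \<Sum>j\<in>Some ` {..<k}. ?X j \<omega>)"
      by (rule P.indep_vars_sum) (auto intro: P.indep_vars_subset[OF indep])
    then show ?thesis by (simp only: sumX) simp
  qed
  have indN: "P.indep_var borel (\<lambda>\<omega>. real (nu \<omega>)) borel (S k)" for k
  proof -
    have "P.indep_var borel (?X None) borel (\<lambda>\<omega>. \<Sum>j\<in>Some ` {..<k}. ?X j \<omega>)"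
      by (rule P.indep_vars_sum) (auto intro: P.indep_vars_subset[OF indep])
    then show ?thesis by (simp only: sumX) simp
  qed
  define D where "D k = distr M borel (S (Suc k))" for k
  define A where "A = distr M borel (Tt 0)"
  have D0: "D 0 = A" unfolding D_def A_def S_def by simp
  have DS: "D (Suc k) = (A \<star> D k)" for k
  proof -
    have "S (Suc (Suc k)) = (\<lambda>\<omega>. Tt (Suc k) \<omega> + S (Suc k) \<omega>)"
      unfolding S_def by (simp add: fun_eq_iff)
    then have "D (Suc k) = distr M borel (\<lambda>\<omega>. Tt (Suc k) \<omega> + S (Suc k) \<omega>)"
      unfolding D_def by simp
    also have "\<dots> = (distr M borel (Tt (Suc k)) \<star> distr M borel (S (Suc k)))"
      by (rule P.sum_indep_random_variable[OF indT]) simp_all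
    finally show ?thesis unfolding A_def D_def iid_distr[of "Suc k"] .
  qed
  have finD: "finite_measure (D k)" for k
    unfolding D_def by (intro prob_space.finite_measure P.prob_space_distr) simp
  have setsD: "sets (D k) = sets borel" for k unfolding D_def by simp
  have setsA: "sets A = sets borel" unfolding A_def by simp
  have finA: "finite_measure A"
    unfolding A_def by (intro prob_space.finite_measure P.prob_space_distr) simp
  have finE: "finite_measure (Erl k b)" for k
    using Erl_prob[OF b] by (intro prob_space.finite_measure) auto
  have EC: "Erl (Suc k) b = (Erl 0 b \<star> Erl k b)" for k
    using Erl_conv[OF b, of k] finE by (simp add: convolution_commutative Erl_sets)
  have tailD: "emeasure (D k) {t<..} = ennreal (measure M {\<omega>\<in>space M. t < S (Suc k) \<omega>})" for k t
  proof -
    have "emeasure (D k) {t<..} = emeasure M (S (Suc k) -` {t<..} \<inter> space M)"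
      unfolding D_def by (rule emeasure_distr) auto
    also have "S (Suc k) -` {t<..} \<inter> space M = {\<omega>\<in>space M. t < S (Suc k) \<omega>}" by auto
    finally show ?thesis by (simp add: P.emeasure_eq_measure)
  qed
  have tailA: "emeasure A {t<..} = ennreal (measure M {\<omega>\<in>space M. Tt 0 \<omega> > t})" for t
  proof -
    have "emeasure A {t<..} = emeasure M (Tt 0 -` {t<..} \<inter> space M)"
      unfolding A_def by (rule emeasure_distr) auto
    also have "Tt 0 -` {t<..} \<inter> space M = {\<omega>\<in>space M. Tt 0 \<omega> > t}" by auto
    finally show ?thesis by (simp add: P.emeasure_eq_measure)
  qed
  have tailE: "emeasure (Erl k b) {t<..} = ennreal (1 - erlang_CDF k b t)" for k t
    by (rule Erl_tail[OF b])
  have tailE_nn: "0 \<le> 1 - erlang_CDF k b t" for k t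
  proof (cases "t < 0")
    case False
    then show ?thesis using b unfolding erlang_CDF_def by (auto intro!: sum_nonneg divide_nonneg_pos)
  qed (simp add: erlang_CDF_def)
  have tail0: "1 - erlang_CDF 0 b t = (if t < 0 then 1 else exp (- b * t))" for t
    by (simp add: erlang_CDF_def)
  have prob_pos: "measure M {\<omega>\<in>space M. Tt 0 \<omega> > t} = 1" if "t < 0" for t
  proof -
    have "AE \<omega> in M. Tt 0 \<omega> > t" using pos[of 0] by eventually_elim (use that in auto)
    then show ?thesis by (subst P.prob_Collect_eq_1) auto
  qed
  have mix: "(\<lambda>k. if k = 0 then 0 else (1/2)^k * measure M {\<omega>\<in>space M. \<tau> < S k \<omega>})
        sums measure M {\<omega> \<in> space M. T \<omega> > \<tau>}" if "\<tau> \<ge> 0" for \<tau>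
  proof -
    define Ev where "Ev k = {\<omega>\<in>space M. nu \<omega> = k \<and> \<tau> < S k \<omega>}" for k
    have U: "{\<omega> \<in> space M. T \<omega> > \<tau>} = (\<Union>k. Ev k)" unfolding Ev_def T_eq by auto
    have Ev_sets: "Ev k \<in> sets M" for k unfolding Ev_def by measurable
    have "(\<lambda>k. measure M (Ev k)) sums measure M (\<Union>k. Ev k)"
      by (rule P.finite_measure_UNION) (use Ev_sets in blast, auto simp: Ev_def disjoint_family_on_def)
    moreover have "measure M (Ev k) = (if k = 0 then 0 else (1/2)^k * measure M {\<omega>\<in>space M. \<tau> < S k \<omega>})" for k
    proof (cases "k = 0")
      case True
      then have "Ev k = {}" unfolding Ev_def S_def using that by auto
      then show ?thesis using True by simp
    next
      case False
      have "P.prob ((\<lambda>x. (real (nu x), S k x)) -` ({real k} \<times> {\<tau><..}) \<inter> space M) =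
        P.prob ((\<lambda>\<omega>. real (nu \<omega>)) -` {real k} \<inter> space M) * P.prob (S k -` {\<tau><..} \<inter> space M)"
        by (rule P.indep_varD[OF indN]) auto
      moreover have "(\<lambda>x. (real (nu x), S k x)) -` ({real k} \<times> {\<tau><..}) \<inter> space M = Ev k"
        unfolding Ev_def by auto
      moreover have "(\<lambda>\<omega>. real (nu \<omega>)) -` {real k} \<inter> space M = {\<omega> \<in> space M. nu \<omega> = k}" by auto
      moreover have "S k -` {\<tau><..} \<inter> space M = {\<omega>\<in>space M. \<tau> < S k \<omega>}" by auto
      ultimately show ?thesis using False nu_distr[of k] by (simp add: power_one_over)
    qed
    ultimately show ?thesis unfolding U by simp
  qed
  have target: "(\<lambda>k. if k = 0 then 0 else (1/2)^k * (1 - erlang_CDF (k - 1) b \<tau>)) sums exp (- b * \<tau> / 2)"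
    if "\<tau> \<ge> 0" for \<tau>
  proof -
    have s1: "(\<lambda>m. exp (- b * \<tau>) * ((1/2)^(Suc m) * (\<Sum>n\<le>m. (b*\<tau>)^n / fact n))) sums (exp (- b * \<tau>) * exp (b * \<tau> / 2))"
      by (intro sums_mult half_series)
    have e1: "exp (- b * \<tau>) * exp (b * \<tau> / 2) = exp (- b * \<tau> / 2)"
      by (simp add: exp_add[symmetric])
    have e2: "exp (- b * \<tau>) * ((1/2)^(Suc m) * (\<Sum>n\<le>m. (b*\<tau>)^n / fact n)) =
        (1/2)^(Suc m) * (1 - erlang_CDF m b \<tau>)" for m
      using that by (simp add: erlang_CDF_def sum_distrib_left mult_ac)
    have "(\<lambda>m. exp (- b * \<tau>) * ((1/2)^(Suc m) * (\<Sum>n\<le>m. (b*\<tau>)^n / fact n))) = (\<lambda>m. (1/2)^(Suc m) * (1 - erlang_CDF m b \<tau>))"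
      by (intro ext e2)
    with s1 e1 have "(\<lambda>m. (1/2)^(Suc m) * (1 - erlang_CDF m b \<tau>)) sums exp (- b * \<tau> / 2)"
      by simp
    then have "(\<lambda>k. if k = 0 then 0 else (1/2)^k * (1 - erlang_CDF (k - 1) b \<tau>)) sums (exp (- b * \<tau> / 2) + (if (0::nat) = 0 then 0 else (1/2)^0 * (1 - erlang_CDF (0 - 1) b \<tau>)))"
      by (intro sums_Suc_iff[THEN iffD1]) simp
    then show ?thesis by simp
  qed
  show ?thesis
  proof (intro conjI impI allI)
    fix \<tau> :: real
    assume H: "\<forall>\<tau>\<ge>0. measure M {\<omega> \<in> space M. Tt 0 \<omega> > \<tau>} \<le> exp (- b * \<tau>)" and t: "\<tau> \<ge> 0"
    have dA: "emeasure A {t<..} \<le> emeasure (Erl 0 b) {t<..}" for t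
      unfolding tailA tailE tail0 using H P.prob_le_1 by (auto intro!: ennreal_leI)
    have dD: "emeasure (D k) {t<..} \<le> emeasure (Erl k b) {t<..}" for k t
      by (rule dom_iter[where F=D and G="\<lambda>k. Erl k b" and A=A and B="Erl 0 b"])
         (auto simp: finD finA finE D0 DS EC dA Erl_sets setsD setsA)
    have "measure M {\<omega>\<in>space M. t < S (Suc k) \<omega>} \<le> 1 - erlang_CDF k b t" for k t
      using dD[of k t] unfolding tailD tailE using tailE_nn by (simp add: ennreal_le_iff)
    then have "(if k = 0 then 0 else (1/2)^k * measure M {\<omega>\<in>space M. \<tau> < S k \<omega>}) \<le>
       (if k = 0 then 0 else (1/2)^k * (1 - erlang_CDF (k - 1) b \<tau>))" for k
      by (cases k) (auto intro: mult_left_mono)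
    then show "measure M {\<omega> \<in> space M. T \<omega> > \<tau>} \<le> exp (- b * \<tau> / 2)"
      by (rule sums_le[OF _ mix[OF t] target[OF t]])
  next
    fix \<tau> :: real
    assume H: "\<forall>\<tau>\<ge>0. measure M {\<omega> \<in> space M. Tt 0 \<omega> > \<tau>} \<ge> exp (- b * \<tau>)" and t: "\<tau> \<ge> 0"
    have dA: "emeasure (Erl 0 b) {t<..} \<le> emeasure A {t<..}" for t
      unfolding tailA tailE tail0 using H prob_pos by (auto intro!: ennreal_leI)
    have dD: "emeasure (Erl k b) {t<..} \<le> emeasure (D k) {t<..}" for k t
      by (rule dom_iter[where G=D and F="\<lambda>k. Erl k b" and B=A and A="Erl 0 b"])
         (auto simp: finD finA finE D0 DS EC dA Erl_sets setsD setsA)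
    have "1 - erlang_CDF k b t \<le> measure M {\<omega>\<in>space M. t < S (Suc k) \<omega>}" for k t
      using dD[of k t] unfolding tailD tailE by (simp add: ennreal_le_iff)
    then have "(if k = 0 then 0 else (1/2)^k * (1 - erlang_CDF (k - 1) b \<tau>)) \<le>
       (if k = 0 then 0 else (1/2)^k * measure M {\<omega>\<in>space M. \<tau> < S k \<omega>})" for k
      by (cases k) (auto intro: mult_left_mono)
    then show "measure M {\<omega> \<in> space M. T \<omega> > \<tau>} \<ge> exp (- b * \<tau> / 2)"
      by (rule sums_le[OF _ target[OF t] mix[OF t]])
  qed
qed

end
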